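(* Let $A\in\mathbb{R}^{3\times 3}$ with $\operatorname{tr}A=0$, and suppose there is a real invertible matrix $S$ such that $S^{-1}AS = D + B$, where $$D=\begin{bmatrix}\varepsilon_1&0&0\\0&\varepsilon_2&0\\0&0&\varepsilon_3\end{bmatrix},\qquad B=\begin{bmatrix}0&r&0\\-r&0&0\\0&0&0\end{bmatrix},$$ with $\varepsilon_1,\varepsilon_2,\varepsilon_3,r\in\mathbb{R}$, and with $\varepsilon_1=\varepsilon_2$ whenever $r\neq 0$ (so that $DB=BD$). (This covers every trace-free $A$ that is diagonalizable over $\mathbb{R}$, with $B=0$, and every trace-free $A$ with a pair of non-real complex eigenvalues.) Let $M_1,M_2\in SL(3,\mathbb{Z})$ be symmetric, commuting, with positive eigenvalues. Let $V$ be an orthogonal matrix with $V^{-1}M_iV=\Lambda_i=\operatorname{diag}(\lambda_{i,1},\lambda_{i,2},\lambda_{i,3})$ for $i=1,2$, put $\hat\omega_i=(\log\lambda_{i,1},\log\lambda_{i,2},\log\lambda_{i,3})^T$, and assume $\hat\omega_1,\hat\omega_2$ are linearly independent. Let $L_t=e^{At}\,S\,V^{-1}$ for $t\ge 0$. Then: (i) For every $t\ge 0$ there exist integers $n_1,n_2$ and $\theta_1,\theta_2\in(-\tfrac12,\tfrac12]$ such that $$L_t M_1^{n_1}M_2^{n_2} = S\,e^{Bt}\,\exp\!\big(\operatorname{diag}(\theta_1\hat\omega_1+\theta_2\hat\omega_2)\big)\,V^{-1},$$ where $\operatorname{diag}(x)$ denotes the diagonal matrix with diagonal $x$; moreover $\{L_t\mathbf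 n:\mathbf n\in\mathbb{Z}^3\}=\{L_tM_1^{n_1}M_2^{n_2}\mathbf n:\mathbf n\in\mathbb{Z}^3\}$. (ii) There is a constant $c>0$, independent of $t$, such that $\min_{\mathbf n\in\mathbb{Z}^3\setminus\{0\}}\|L_t\mathbf n\|\ge c$ for all $t\ge 0$; i.e., the minimum distance between a point and its periodic replicas in the lattice generated by the columns of $L_t$ stays bounded below for all time.
   Context: $SL(3,\mathbb{Z})$ denotes the group of $3\times 3$ integer matrices with determinant $1$. The columns of $L_t$ are the lattice basis vectors of a periodic simulation box deforming with the homogeneous linear flow with velocity gradient $A$, i.e. $\frac{d}{dt}L_t=AL_t$; periodic replicas of a point $\mathbf q$ are the points $\mathbf q+L_t\mathbf n$, $\mathbf n\in\mathbb{Z}^3$. The matrix exponential $\exp$ of a diagonal matrix is the diagonal matrix of exponentials of its entries; $\|\cdot\|$ is the Euclidean norm. *)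

theory Defs
  imports "HOL-Analysis.Analysis"
begin

primrec matpow :: "real^'n^'n \<Rightarrow> nat \<Rightarrow> real^'n^'n" where
  "matpow M 0 = mat 1"
| "matpow M (Suc k) = M ** matpow M k"

definition matpow_int :: "real^'n^'n \<Rightarrow> int \<Rightarrow> real^'n^'n" where
  "matpow_int M k = (if 0 \<le> k then matpow M (nat k) else matpow (matrix_inv M) (nat (- k)))"

definition mexp :: "real^'n^'n \<Rightarrow> real^'n^'n" where
  "mexp M = (\<Sum>k. (1 / fact k) *\<^sub>R matpow M k)"

definition diagm :: "real^'n \<Rightarrow> real^'n^'n" where
  "diagm x = (\<chi> i j. if i = j then x $ i else 0)"

definition diag_exp :: "real^'n \<Rightarrow> real^'n^'n" where
  "diag_exp x = diagm (\<chi> i. exp (x $ i))"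

definition int_vecs :: "(real^'n) set" where
  "int_vecs = {v. \<forall>i. v $ i \<in> \<int>}"

definition SL_Z :: "(real^'n^'n) set" where
  "SL_Z = {M. (\<forall>i j. M $ i $ j \<in> \<int>) \<and> det M = 1}"

end

theory Submission
  imports Defs
begin


lemma minv_props:
  fixes A :: "real^'n^'n"
  assumes "invertible A"
  shows "A ** matrix_inv A = mat 1" "matrix_inv A ** A = mat 1"
proof -
  have "\<exists>A'. A ** A' = mat 1 \<and> A' ** A = mat 1" using assms unfolding invertible_def by blast
  then have "A ** matrix_inv A = mat 1 \<and> matrix_inv A ** A = mat 1"
    unfolding matrix_inv_def by (rule someI_ex)
  then show "A ** matrix_inv A = mat 1" "matrix_inv A ** A = mat 1" by auto
qed

lemma minv_unique:
  fixes A X :: "real^'n^'n"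
  assumes "A ** X = mat 1"
  shows "matrix_inv A = X"
proof -
  have XA: "X ** A = mat 1" using assms matrix_left_right_inverse by blast
  have inv: "invertible A" using assms XA unfolding invertible_def by blast
  have "matrix_inv A = matrix_inv A ** (A ** X)" using assms by simp
  also have "\<dots> = (matrix_inv A ** A) ** X" by (simp add: matrix_mul_assoc)
  also have "\<dots> = X" using minv_props(2)[OF inv] by simp
  finally show ?thesis .
qed

lemma vec_sums:
  fixes f :: "nat \<Rightarrow> 'a::real_normed_vector^'n"
  assumes "\<And>i. (\<lambda>k. f k $ i) sums (E $ i)"
  shows "f sums E"
  using assms unfolding sums_def
  by (intro vec_tendstoI) (simp add: sum_component)

lemma mat_sums:
  fixes f :: "nat \<Rightarrow> real^'n^'m"
  assumes "\<And>i j. (\<lambda>k. f k $ i $ j) sums (E $ i $ j)"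
  shows "f sums E"
proof (rule vec_sums)
  fix i show "(\<lambda>k. f k $ i) sums (E $ i)"
    by (rule vec_sums[of "\<lambda>k. f k $ i"], rule assms)
qed

lemma mm_scaleR_right: "(A::real^'n^'m) ** (c *\<^sub>R B) = c *\<^sub>R (A ** (B::real^'k^'n))"
  by (simp add: matrix_matrix_mult_def vec_eq_iff sum_distrib_left algebra_simps)
lemma mm_scaleR_left: "(c *\<^sub>R (A::real^'n^'m)) ** B = c *\<^sub>R (A ** (B::real^'k^'n))"
  by (simp add: matrix_matrix_mult_def vec_eq_iff sum_distrib_left algebra_simps)
lemma mm_add_left: "((A::real^'n^'m) + B) ** C = A ** C + B ** (C::real^'k^'n)"
  by (simp add: matrix_matrix_mult_def vec_eq_iff sum.distrib algebra_simps)

lemma matpow_conj: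
  fixes S X :: "real^'n^'n"
  assumes "invertible S"
  shows "matpow (S ** X ** matrix_inv S) k = S ** matpow X k ** matrix_inv S"
proof (induction k)
  case 0
  then show ?case using minv_props[OF assms] by simp
next
  case (Suc k)
  have "matpow (S ** X ** matrix_inv S) (Suc k) = S ** X ** (matrix_inv S ** S) ** matpow X k ** matrix_inv S"
    using Suc by (simp add: matrix_mul_assoc)
  also have "\<dots> = S ** matpow X (Suc k) ** matrix_inv S"
    using minv_props[OF assms] by (simp add: matrix_mul_assoc)
  finally show ?case .
qed

lemma bl_conj:
  fixes S T :: "real^'n^'n"
  shows "bounded_linear (\<lambda>M. S ** M ** T)"
proof -
  have "linear (\<lambda>M. S ** M ** T)"
    by (rule linearI) (simp_all add: matrix_add_ldistrib mm_add_left mm_scaleR_left mm_scaleR_right)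
  then show ?thesis by (simp add: linear_conv_bounded_linear)
qed

lemma mexp_eq: "(\<lambda>k. (1 / fact k) *\<^sub>R matpow M k) sums E \<Longrightarrow> mexp M = E"
  unfolding mexp_def by (rule sums_unique[symmetric])

lemma mexp_conj:
  fixes S X E :: "real^'n^'n"
  assumes "invertible S" "(\<lambda>k. (1 / fact k) *\<^sub>R matpow X k) sums E"
  shows "mexp (S ** X ** matrix_inv S) = S ** E ** matrix_inv S"
proof (rule mexp_eq)
  have "(\<lambda>k. S ** ((1 / fact k) *\<^sub>R matpow X k) ** matrix_inv S) sums (S ** E ** matrix_inv S)"
    by (rule bounded_linear.sums[OF bl_conj assms(2)])
  moreover have "S ** ((1 / fact k) *\<^sub>R matpow X k) ** matrix_inv S = (1 / fact k) *\<^sub>R matpow (S ** X ** matrix_inv S) k" for k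
    by (simp add: matpow_conj[OF assms(1)] mm_scaleR_left mm_scaleR_right)
  ultimately show "(\<lambda>k. (1 / fact k) *\<^sub>R matpow (S ** X ** matrix_inv S) k) sums (S ** E ** matrix_inv S)"
    by simp
qed



lemma diag_mult3: "diagm (x::real^3) ** diagm y = diagm (\<chi> i. x$i * y$i)"
  by (simp add: diagm_def matrix_matrix_mult_def vec_eq_iff forall_3 sum_3)

lemma diag_one3: "(mat 1 :: real^3^3) = diagm (\<chi> i. 1)"
  by (simp add: diagm_def mat_def vec_eq_iff forall_3)

lemma diag_pow3: "matpow (diagm (x::real^3)) k = diagm (\<chi> i. x$i ^ k)"
  by (induction k) (simp_all add: diag_one3 diag_mult3)

lemma diag_exp_sums:
  "(\<lambda>k. (1 / fact k) *\<^sub>R matpow (diagm (x::real^3)) k) sums diag_exp x"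
proof (rule mat_sums)
  fix i j :: 3
  show "(\<lambda>k. ((1 / fact k) *\<^sub>R matpow (diagm x) k) $ i $ j) sums (diag_exp x $ i $ j)"
  proof (cases "i = j")
    case True
    have "(\<lambda>k. (x$i)^k /\<^sub>R fact k) sums exp (x$i)" by (rule exp_converges)
    then show ?thesis using True unfolding diag_pow3 by (simp add: diag_exp_def diagm_def divide_inverse mult.commute)
  next
    case False
    then show ?thesis unfolding diag_pow3 by (simp add: diag_exp_def diagm_def)
  qed
qed

lemma mexp_diag: "mexp (diagm (x::real^3)) = diag_exp x"
  by (rule mexp_eq[OF diag_exp_sums])

definition Mz :: "complex \<Rightarrow> real \<Rightarrow> real^3^3" where
  "Mz z w = (\<chi> i j. if i = 1 \<and> j = 1 then Re z else if i = 1 \<and> j = 2 then Im z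
     else if i = 2 \<and> j = 1 then - Im z else if i = 2 \<and> j = 2 then Re z
     else if i = 3 \<and> j = 3 then w else 0)"

lemma Mz_mult: "Mz a b ** Mz c d = Mz (a * c) (b * d)"
  by (simp add: Mz_def matrix_matrix_mult_def vec_eq_iff forall_3 sum_3 algebra_simps)

lemma Mz_one: "(mat 1 :: real^3^3) = Mz 1 1"
  by (simp add: Mz_def mat_def vec_eq_iff forall_3)

lemma Mz_pow: "matpow (Mz z w) k = Mz (z ^ k) (w ^ k)"
  by (induction k) (simp_all add: Mz_one Mz_mult)

lemma Mz_sums:
  "(\<lambda>k. (1 / fact k) *\<^sub>R matpow (Mz z w) k) sums Mz (exp z) (exp w)"
proof (rule mat_sums)
  fix i j :: 3
  have c: "(\<lambda>k. z^k /\<^sub>R fact k) sums exp z" by (rule exp_converges)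
  have r: "(\<lambda>k. Re (z^k) / fact k) sums Re (exp z)" using sums_Re[OF c] by (simp add: divide_inverse mult.commute)
  have im: "(\<lambda>k. Im (z^k) / fact k) sums Im (exp z)" using sums_Im[OF c] by (simp add: divide_inverse mult.commute)
  have imm: "(\<lambda>k. - Im (z^k) / fact k) sums (- Im (exp z))" using sums_minus[OF im] by simp
  have ww: "(\<lambda>k. w^k / fact k) sums exp w" using exp_converges[of w] by (simp add: divide_inverse mult.commute)
  show "(\<lambda>k. ((1 / fact k) *\<^sub>R matpow (Mz z w) k) $ i $ j) sums (Mz (exp z) (exp w) $ i $ j)"
    using r im imm ww exhaust_3[of i] exhaust_3[of j]
    unfolding Mz_pow by (auto simp add: Mz_def)
qed

lemma mexp_Mz: "mexp (Mz z w) = Mz (exp z) (exp w)"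
  by (rule mexp_eq[OF Mz_sums])



lemma orth_inv:
  fixes V :: "real^'n^'n"
  assumes "orthogonal_matrix V"
  shows "invertible V" "matrix_inv V = transpose V"
  using assms unfolding orthogonal_matrix_def invertible_def
  by (auto intro: minv_unique)

lemma diag_vec_axis: "diagm (lam::real^3) *v axis j 1 = lam$j *\<^sub>R axis j 1"
  using exhaust_3[of j]
  by (auto simp: vec_eq_iff forall_3 matrix_vector_mult_def sum_3 axis_def diagm_def)

lemma inv_cancel:
  fixes V X :: "real^'n^'n"
  assumes "invertible V"
  shows "X ** matrix_inv V ** V = X" "X ** V ** matrix_inv V = X"
    "matrix_inv V ** V = mat 1" "V ** matrix_inv V = mat 1"
  using minv_props[OF assms] by (simp_all add: matrix_mul_assoc[symmetric])

lemma conj_back: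
  fixes M V D :: "real^'n^'n"
  assumes "invertible V" "matrix_inv V ** M ** V = D"
  shows "M = V ** D ** matrix_inv V"
  by (simp add: assms(2)[symmetric] matrix_mul_assoc inv_cancel[OF assms(1)])

lemma eig_pos:
  fixes M V :: "real^3^3"
  assumes V: "invertible V" and eq: "matrix_inv V ** M ** V = diagm lam"
    and pos: "\<And>\<mu> v. v \<noteq> 0 \<Longrightarrow> M *v v = \<mu> *\<^sub>R v \<Longrightarrow> \<mu> > 0"
  shows "lam $ j > 0"
proof -
  have MV: "M ** V = V ** diagm lam"
    using conj_back[OF V eq] by (simp add: matrix_mul_assoc inv_cancel[OF V])
  define v where "v = V *v axis j 1"
  have "M *v v = (V ** diagm lam) *v axis j 1"
    unfolding v_def matrix_vector_mul_assoc MV ..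
  also have "\<dots> = V *v (lam$j *\<^sub>R axis j 1)"
    by (simp add: matrix_vector_mul_assoc[symmetric] diag_vec_axis)
  also have "\<dots> = lam$j *\<^sub>R v" unfolding v_def by (simp add: matrix_vector_mult_scaleR)
  finally have ev: "M *v v = lam$j *\<^sub>R v" .
  have "v \<noteq> 0"
  proof
    assume "v = 0"
    then have "matrix_inv V *v v = 0" by simp
    then have "axis j (1::real) = 0"
      unfolding v_def matrix_vector_mul_assoc minv_props[OF V] by simp
    then show False by (simp add: axis_eq_0_iff)
  qed
  then show ?thesis using pos ev by blast
qed

lemma det_diag3: "det (diagm (lam::real^3)) = lam$1 * lam$2 * lam$3"
  by (simp add: det_3 diagm_def)

lemma det_one_conj:
  fixes M V :: "real^3^3"
  assumes V: "invertible V" and eq: "matrix_inv V ** M ** V = diagm lam" and d: "det M = 1"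
  shows "lam$1 * lam$2 * lam$3 = 1"
proof -
  have "det (matrix_inv V ** M ** V) = det M * (det (matrix_inv V) * det V)"
    by (simp add: det_mul)
  also have "det (matrix_inv V) * det V = 1"
    using minv_props(2)[OF V] by (metis det_I det_mul)
  finally show ?thesis using eq d by (simp add: det_diag3)
qed

lemma ln_sum_zero:
  fixes M V :: "real^3^3"
  assumes V: "invertible V" and eq: "matrix_inv V ** M ** V = diagm lam" and d: "det M = 1"
    and pos: "\<And>j. lam $ j > 0"
  shows "ln (lam$1) + ln (lam$2) + ln (lam$3) = 0"
proof -
  have "ln (lam$1 * lam$2 * lam$3) = ln (lam$1) + ln (lam$2) + ln (lam$3)"
    using pos[of 1] pos[of 2] pos[of 3] by (simp add: ln_mult)
  then show ?thesis using det_one_conj[OF V eq d] by simp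
qed

lemma matpow_int_formula:
  fixes M V :: "real^3^3"
  assumes V: "invertible V" and eq: "matrix_inv V ** M ** V = diagm lam"
    and pos: "\<And>j. lam $ j > 0"
  shows "matpow_int M n = V ** diag_exp (real_of_int n *\<^sub>R (\<chi> j. ln (lam $ j))) ** matrix_inv V"
proof -
  have M: "M = V ** diagm lam ** matrix_inv V" by (rule conj_back[OF V eq])
  define Mi where "Mi = V ** diagm (\<chi> j. 1 / lam $ j) ** matrix_inv V"
  have "M ** Mi = V ** (diagm lam ** ((matrix_inv V ** V) ** diagm (\<chi> j. 1 / lam $ j))) ** matrix_inv V"
    unfolding M Mi_def by (simp add: matrix_mul_assoc)
  also have "\<dots> = V ** matrix_inv V"
    using minv_props[OF V] pos by (simp add: diag_mult3 diag_one3[symmetric] less_imp_neq[symmetric])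
  also have "\<dots> = mat 1" using minv_props[OF V] by simp
  finally have Minv: "matrix_inv M = Mi" by (rule minv_unique)
  show ?thesis
  proof (cases "0 \<le> n")
    case True
    then obtain m where n: "n = int m" by (metis nonneg_int_cases)
    have "matpow_int M n = V ** diagm (\<chi> i. lam$i ^ m) ** matrix_inv V"
      unfolding matpow_int_def using True n
      by (simp add: M matpow_conj[OF V] diag_pow3)
    also have "diagm (\<chi> i. lam$i ^ m) = diag_exp (real_of_int n *\<^sub>R (\<chi> j. ln (lam $ j)))"
      unfolding diag_exp_def n using pos
      by (simp add: exp_of_nat_mult)
    finally show ?thesis .
  next
    case False
    then obtain m where n: "n = - int m" by (metis nle_le nonpos_int_cases)
    have "matpow_int M n = V ** diagm (\<chi> i. (1 / lam$i) ^ m) ** matrix_inv V"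
      unfolding matpow_int_def using False n
      by (simp add: Minv Mi_def matpow_conj[OF V] diag_pow3)
    also have "diagm (\<chi> i. (1/lam$i) ^ m) = diag_exp (real_of_int n *\<^sub>R (\<chi> j. ln (lam $ j)))"
    proof -
      have "exp (- (real m * ln (lam$i))) = (1/lam$i)^m" for i
        using pos[of i] by (simp add: exp_minus exp_of_nat_mult power_one_over inverse_eq_divide)
      then show ?thesis unfolding diag_exp_def n by simp
    qed
    finally show ?thesis .
  qed
qed



definition intm :: "real^'n^'m \<Rightarrow> bool" where
  "intm X \<longleftrightarrow> (\<forall>i j. X$i$j \<in> \<int>)"

lemma intm_mult: "intm A \<Longrightarrow> intm B \<Longrightarrow> intm (A ** B)"
  unfolding intm_def matrix_matrix_mult_def by (auto intro!: Ints_sum Ints_mult)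

lemma intm_one: "intm (mat 1)"
  unfolding intm_def mat_def by auto

lemma intm_vec: "intm A \<Longrightarrow> x \<in> int_vecs \<Longrightarrow> A *v x \<in> int_vecs"
  unfolding intm_def int_vecs_def matrix_vector_mult_def by (auto intro!: Ints_sum Ints_mult)

lemma intm_matpow: "intm M \<Longrightarrow> intm (matpow M k)"
  by (induction k) (simp_all add: intm_one intm_mult)

definition adj3 :: "real^3^3 \<Rightarrow> real^3^3" where
  "adj3 M = (\<chi> i j.
     if i = 1 then (if j = 1 then M$2$2*M$3$3 - M$2$3*M$3$2 else if j = 2 then M$1$3*M$3$2 - M$1$2*M$3$3
                    else M$1$2*M$2$3 - M$1$3*M$2$2)
     else if i = 2 then (if j = 1 then M$2$3*M$3$1 - M$2$1*M$3$3 else if j = 2 then M$1$1*M$3$3 - M$1$3*M$3$1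
                    else M$1$3*M$2$1 - M$1$1*M$2$3)
     else (if j = 1 then M$2$1*M$3$2 - M$2$2*M$3$1 else if j = 2 then M$1$2*M$3$1 - M$1$1*M$3$2
                    else M$1$1*M$2$2 - M$1$2*M$2$1))"

lemma adj3_mult: "M ** adj3 M = det M *\<^sub>R mat 1"
  by (simp add: adj3_def matrix_matrix_mult_def vec_eq_iff forall_3 sum_3 det_3 mat_def algebra_simps)

lemma intm_adj3: "intm M \<Longrightarrow> intm (adj3 M)"
  unfolding intm_def adj3_def by (auto simp: forall_3 intro!: Ints_diff Ints_mult)

lemma SL_inv:
  assumes "M \<in> SL_Z"
  shows "matrix_inv M = adj3 M" "intm (matrix_inv M)" "intm M"
proof -
  have "det M = 1" "intm M" using assms unfolding SL_Z_def intm_def by auto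
  then show "matrix_inv M = adj3 M" by (intro minv_unique) (simp add: adj3_mult)
  then show "intm (matrix_inv M)" using intm_adj3 \<open>intm M\<close> by simp
  show "intm M" by fact
qed

lemma intm_matpow_int: "(M::real^3^3) \<in> SL_Z \<Longrightarrow> intm (matpow_int M n)"
  unfolding matpow_int_def using SL_inv(2,3)[of M] by (simp add: intm_matpow)

lemma orth_norm:
  fixes Q :: "real^'n^'n"
  assumes "orthogonal_matrix Q"
  shows "norm (Q *v x) = norm x"
proof -
  have "orthogonal_transformation (\<lambda>x. Q *v x)"
    using assms by (simp add: orthogonal_transformation_matrix)
  then show ?thesis by (simp add: orthogonal_transformation_norm)
qed

lemma inv_lower:
  fixes X :: "real^'n^'n"
  assumes "invertible X"
  shows "\<exists>k>0. \<forall>x. k * norm x \<le> norm (X *v x)"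
proof -
  obtain K where K: "K > 0" "\<And>y. norm (matrix_inv X *v y) \<le> norm y * K"
    using bounded_linear.pos_bounded[OF matrix_vector_mul_bounded_linear[of "matrix_inv X"]] by blast
  have "(1/K) * norm x \<le> norm (X *v x)" for x
  proof -
    have "norm x = norm (matrix_inv X *v (X *v x))"
      by (simp add: matrix_vector_mul_assoc minv_props[OF assms])
    also have "\<dots> \<le> norm (X *v x) * K" by (rule K(2))
    finally show ?thesis using K(1) by (simp add: field_simps)
  qed
  then show ?thesis using K(1) by (intro exI[of _ "1/K"]) auto
qed

lemma norm3_sq: "norm (x::real^3) ^ 2 = (x$1)^2 + (x$2)^2 + (x$3)^2"
  by (simp only: power2_norm_eq_inner) (simp add: inner_vec_def sum_3 power2_eq_square)

lemma diag_exp_lower: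
  fixes u :: "real^3"
  assumes "\<And>j. \<bar>u$j\<bar> \<le> K"
  shows "exp (-K) * norm x \<le> norm (diag_exp u *v x)"
proof -
  have y: "(diag_exp u *v x) $ j = exp (u$j) * x$j" for j
    using exhaust_3[of j]
    by (auto simp: diag_exp_def diagm_def matrix_vector_mult_def sum_3)
  have e: "exp (-K) ^ 2 \<le> exp (u$j) ^ 2" for j
  proof -
    have "-K \<le> u$j" using assms[of j] by linarith
    then show ?thesis by (simp add: power_mono)
  qed
  have "(exp (-K) * norm x)^2 = exp (-K)^2 * (x$1)^2 + exp (-K)^2 * (x$2)^2 + exp (-K)^2 * (x$3)^2"
    by (simp add: power_mult_distrib norm3_sq algebra_simps)
  also have "\<dots> \<le> exp (u$1)^2 * (x$1)^2 + exp (u$2)^2 * (x$2)^2 + exp (u$3)^2 * (x$3)^2"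
    by (intro add_mono mult_right_mono e) auto
  also have "\<dots> = norm (diag_exp u *v x) ^ 2"
    by (simp add: norm3_sq y power_mult_distrib)
  finally show ?thesis by (rule power2_le_imp_le) simp
qed

lemma int_vec_norm:
  assumes "m \<in> int_vecs" "m \<noteq> (0::real^'n)"
  shows "1 \<le> norm m"
proof -
  obtain i where "m$i \<noteq> 0" using assms(2) by (auto simp: vec_eq_iff)
  moreover have "m$i \<in> \<int>" using assms(1) by (auto simp: int_vecs_def)
  ultimately have "1 \<le> \<bar>m$i\<bar>"
    by (metis Ints_cases of_int_0_eq_iff of_int_abs of_int_1_le_iff zero_less_abs_iff int_one_le_iff_zero_less)
  also have "\<dots> \<le> norm m" by (rule component_le_norm_cart)
  finally show ?thesis .
qed

definition Rot :: "real \<Rightarrow> real^3^3" where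
  "Rot a = Mz (exp (Complex 0 a)) 1"

lemma Rot_orth: "orthogonal_matrix (Rot a)"
  unfolding orthogonal_matrix Rot_def
  by (simp add: Mz_def matrix_matrix_mult_def vec_eq_iff forall_3 sum_3 mat_def transpose_def
      Re_exp Im_exp power2_eq_square[symmetric] algebra_simps)



lemma lin_solve:
  fixes w u x :: "real^3"
  assumes sw: "w$1 + w$2 + w$3 = 0" and su: "u$1 + u$2 + u$3 = 0" and sx: "x$1 + x$2 + x$3 = 0"
    and indep: "\<And>a b. a *\<^sub>R w + b *\<^sub>R u = 0 \<Longrightarrow> a = 0 \<and> b = 0"
  shows "\<exists>a b. x = a *\<^sub>R w + b *\<^sub>R u"
proof -
  define d where "d = w$1 * u$2 - w$2 * u$1"
  have w3: "w$3 = - w$1 - w$2" and u3: "u$3 = - u$1 - u$2" and x3: "x$3 = - x$1 - x$2"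
    using sw su sx by linarith+
  have "d \<noteq> 0"
  proof
    assume d0: "d = 0"
    have "(u$2) *\<^sub>R w + (- w$2) *\<^sub>R u = 0"
      using d0 by (simp add: vec_eq_iff forall_3 w3 u3 d_def algebra_simps)
    then have a: "u$2 = 0 \<and> w$2 = 0" using indep by fastforce
    have "(u$1) *\<^sub>R w + (- w$1) *\<^sub>R u = 0"
      using d0 by (simp add: vec_eq_iff forall_3 w3 u3 d_def algebra_simps)
    then have b: "u$1 = 0 \<and> w$1 = 0" using indep by fastforce
    have "1 *\<^sub>R w + 0 *\<^sub>R u = 0" using a b by (simp add: vec_eq_iff forall_3 w3)
    then show False using indep by fastforce
  qed
  define a where "a = (x$1 * u$2 - x$2 * u$1) / d"
  define b where "b = (w$1 * x$2 - w$2 * x$1) / d"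
  have e1: "a * w$1 + b * u$1 = x$1"
  proof -
    have "a * w$1 + b * u$1 = ((x$1 * u$2 - x$2 * u$1) * w$1 + (w$1 * x$2 - w$2 * x$1) * u$1) / d"
      by (simp add: a_def b_def add_divide_distrib)
    also have "\<dots> = x$1 * d / d" by (simp add: d_def algebra_simps)
    finally show ?thesis using \<open>d \<noteq> 0\<close> by simp
  qed
  have e2: "a * w$2 + b * u$2 = x$2"
  proof -
    have "a * w$2 + b * u$2 = ((x$1 * u$2 - x$2 * u$1) * w$2 + (w$1 * x$2 - w$2 * x$1) * u$2) / d"
      by (simp add: a_def b_def add_divide_distrib)
    also have "\<dots> = x$2 * d / d" by (simp add: d_def algebra_simps)
    finally show ?thesis using \<open>d \<noteq> 0\<close> by simp
  qed
  have "x = a *\<^sub>R w + b *\<^sub>R u"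
    using e1 e2 by (simp add: vec_eq_iff forall_3 w3 u3 x3 algebra_simps)
  then show ?thesis by blast
qed

lemma diag_exp_add: "diag_exp (x::real^3) ** diag_exp y = diag_exp (x + y)"
  by (simp add: diag_exp_def diag_mult3 exp_add)

lemma diag_exp_zero: "diag_exp (0::real^3) = mat 1"
  by (simp add: diag_exp_def diag_one3)



lemma mexp_DB:
  fixes eps :: "real^3" and r t :: real and D B :: "real^3^3"
  assumes D_def: "D = diagm eps"
    and B_def: "B = (\<chi> i j. if i = 1 \<and> j = 2 then r else if i = 2 \<and> j = 1 then - r else 0)"
    and eps_eq: "r \<noteq> 0 \<Longrightarrow> eps $ 1 = eps $ 2"
  shows "(\<lambda>k. (1 / fact k) *\<^sub>R matpow (t *\<^sub>R (D + B)) k) sums (Rot (t * r) ** diag_exp (t *\<^sub>R eps))"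
    and "mexp (t *\<^sub>R B) = Rot (t * r)"
proof -
  have tB: "t *\<^sub>R B = Mz (Complex 0 (t * r)) 0"
    by (simp add: B_def Mz_def vec_eq_iff forall_3)
  show "mexp (t *\<^sub>R B) = Rot (t * r)"
    unfolding tB mexp_Mz Rot_def by simp
  show "(\<lambda>k. (1 / fact k) *\<^sub>R matpow (t *\<^sub>R (D + B)) k) sums (Rot (t * r) ** diag_exp (t *\<^sub>R eps))"
  proof (cases "r = 0")
    case True
    have e: "t *\<^sub>R (D + B) = diagm (t *\<^sub>R eps)"
      using True by (simp add: B_def D_def diagm_def vec_eq_iff forall_3)
    have R: "Rot (t * r) = mat 1"
      using True by (simp add: Rot_def Mz_one zero_complex.ctr[symmetric])
    show ?thesis unfolding e R by (simp add: diag_exp_sums)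
  next
    case False
    then have e12: "eps$2 = eps$1" using eps_eq by simp
    have e: "t *\<^sub>R (D + B) = Mz (Complex (t * eps$1) (t * r)) (t * eps$3)"
      using e12 by (simp add: B_def D_def diagm_def Mz_def vec_eq_iff forall_3)
    have R: "Mz (exp (Complex (t * eps$1) (t * r))) (exp (t * eps$3)) = Rot (t * r) ** diag_exp (t *\<^sub>R eps)"
      using e12 by (simp add: Rot_def Mz_def diag_exp_def diagm_def matrix_matrix_mult_def vec_eq_iff
          forall_3 sum_3 Re_exp Im_exp)
    show ?thesis unfolding e R[symmetric] by (rule Mz_sums)
  qed
qed



theorem mainTheorem1:
  fixes A S D B V M1 M2 :: "real^3^3"
    and eps :: "real^3" and r :: real
    and lam1 lam2 :: "real^3"
    and L :: "real \<Rightarrow> real^3^3"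
  assumes trA: "trace A = 0"
    and S_inv: "invertible S"
    and D_def: "D = diagm eps"
    and B_def: "B = (\<chi> i j. if i = 1 \<and> j = 2 then r else if i = 2 \<and> j = 1 then - r else 0)"
    and eps_eq: "r \<noteq> 0 \<Longrightarrow> eps $ 1 = eps $ 2"
    and SAS: "matrix_inv S ** A ** S = D + B"
    and M1_SL: "M1 \<in> SL_Z" and M2_SL: "M2 \<in> SL_Z"
    and M1_sym: "transpose M1 = M1" and M2_sym: "transpose M2 = M2"
    and comm: "M1 ** M2 = M2 ** M1"
    and M1_pos: "\<And>\<mu> v. v \<noteq> 0 \<Longrightarrow> M1 *v v = \<mu> *\<^sub>R v \<Longrightarrow> \<mu> > 0"
    and M2_pos: "\<And>\<mu> v. v \<noteq> 0 \<Longrightarrow> M2 *v v = \<mu> *\<^sub>R v \<Longrightarrow> \<mu> > 0"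
    and V_orth: "orthogonal_matrix V"
    and V1: "matrix_inv V ** M1 ** V = diagm lam1"
    and V2: "matrix_inv V ** M2 ** V = diagm lam2"
    and indep: "\<And>a b. a *\<^sub>R (\<chi> j. ln (lam1 $ j)) + b *\<^sub>R (\<chi> j. ln (lam2 $ j)) = 0
                 \<Longrightarrow> a = 0 \<and> b = 0"
    and L_def: "\<And>t. L t = mexp (t *\<^sub>R A) ** S ** matrix_inv V"
  shows "(\<forall>t\<ge>0. \<exists>n1 n2 :: int. \<exists>\<theta>1 \<theta>2 :: real.
            \<theta>1 \<in> {-1/2<..1/2} \<and> \<theta>2 \<in> {-1/2<..1/2} \<and>
            L t ** matpow_int M1 n1 ** matpow_int M2 n2
              = S ** mexp (t *\<^sub>R B)
                  ** diag_exp (\<theta>1 *\<^sub>R (\<chi> j. ln (lam1 $ j)) + \<theta>2 *\<^sub>R (\<chi> j. ln (lam2 $ j)))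
                  ** matrix_inv V \<and>
            {L t *v n | n. n \<in> int_vecs}
              = {(L t ** matpow_int M1 n1 ** matpow_int M2 n2) *v n | n. n \<in> int_vecs})
       \<and> (\<exists>c>0. \<forall>t\<ge>0. \<forall>n\<in>int_vecs - {0}. norm (L t *v n) \<ge> c)"
proof -
  define w1 where "w1 = (\<chi> j. ln (lam1 $ j))"
  define w2 where "w2 = (\<chi> j. ln (lam2 $ j))"
  have Vi: "invertible V" and VT: "matrix_inv V = transpose V" using orth_inv[OF V_orth] by auto
  have pos1: "\<And>j. lam1 $ j > 0" by (rule eig_pos[OF Vi V1 M1_pos])
  have pos2: "\<And>j. lam2 $ j > 0" by (rule eig_pos[OF Vi V2 M2_pos])
  have det1: "det M1 = 1" and det2: "det M2 = 1" using M1_SL M2_SL by (auto simp: SL_Z_def)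
  have sw1: "w1$1 + w1$2 + w1$3 = 0" unfolding w1_def using ln_sum_zero[OF Vi V1 det1 pos1] by simp
  have sw2: "w2$1 + w2$2 + w2$3 = 0" unfolding w2_def using ln_sum_zero[OF Vi V2 det2 pos2] by simp
  have ind: "\<And>a b. a *\<^sub>R w1 + b *\<^sub>R w2 = 0 \<Longrightarrow> a = 0 \<and> b = 0" unfolding w1_def w2_def by (rule indep)
  have trDB: "trace (D + B) = trace A"
  proof -
    have "trace (D + B) = trace ((matrix_inv S ** A) ** S)" using SAS by simp
    also have "\<dots> = trace (S ** (matrix_inv S ** A))" by (rule trace_mul_sym)
    also have "\<dots> = trace A" by (simp add: matrix_mul_assoc inv_cancel[OF S_inv])
    finally show ?thesis .
  qed
  have seps: "eps$1 + eps$2 + eps$3 = 0"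
    using trDB trA by (simp add: trace_def sum_3 D_def B_def diagm_def)
  have Aeq: "A = S ** (D + B) ** matrix_inv S" by (rule conj_back[OF S_inv SAS])
  have Lt: "L t = S ** Rot (t * r) ** diag_exp (t *\<^sub>R eps) ** matrix_inv V" for t
  proof -
    have "t *\<^sub>R A = S ** (t *\<^sub>R (D + B)) ** matrix_inv S"
      unfolding Aeq by (simp add: mm_scaleR_left mm_scaleR_right)
    then have "mexp (t *\<^sub>R A) = S ** (Rot (t * r) ** diag_exp (t *\<^sub>R eps)) ** matrix_inv S"
      using mexp_conj[OF S_inv mexp_DB(1)[OF D_def B_def eps_eq]] by simp
    then show ?thesis unfolding L_def by (simp add: matrix_mul_assoc inv_cancel[OF S_inv])
  qed
  have mB: "mexp (t *\<^sub>R B) = Rot (t * r)" for t by (rule mexp_DB(2)[OF D_def B_def eps_eq])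
  define P where "P n1 n2 = matpow_int M1 n1 ** matpow_int M2 n2" for n1 n2
  define Q where "Q n1 n2 = matpow_int M2 (- n2) ** matpow_int M1 (- n1)" for n1 n2
  have Pf: "P n1 n2 = V ** diag_exp (of_int n1 *\<^sub>R w1 + of_int n2 *\<^sub>R w2) ** matrix_inv V" for n1 n2
    unfolding P_def matpow_int_formula[OF Vi V1 pos1] matpow_int_formula[OF Vi V2 pos2] w1_def w2_def
    by (simp add: matrix_mul_assoc inv_cancel[OF Vi] diag_exp_add[symmetric])
  have Qf: "Q n1 n2 = V ** diag_exp (real_of_int (- n2) *\<^sub>R w2 + real_of_int (- n1) *\<^sub>R w1) ** matrix_inv V" for n1 n2
    unfolding Q_def matpow_int_formula[OF Vi V1 pos1] matpow_int_formula[OF Vi V2 pos2] w1_def w2_def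
    by (simp only: matrix_mul_assoc inv_cancel[OF Vi] diag_exp_add[symmetric] matrix_mul_rid)
  have PQ: "P n1 n2 ** Q n1 n2 = mat 1" for n1 n2
  proof -
    have z: "(of_int n1 *\<^sub>R w1 + of_int n2 *\<^sub>R w2) + (real_of_int (- n2) *\<^sub>R w2 + real_of_int (- n1) *\<^sub>R w1) = 0"
      by (simp add: algebra_simps)
    let ?X = "of_int n1 *\<^sub>R w1 + of_int n2 *\<^sub>R w2"
    let ?Y = "real_of_int (- n2) *\<^sub>R w2 + real_of_int (- n1) *\<^sub>R w1"
    have "P n1 n2 ** Q n1 n2 = V ** (diag_exp ?X ** (matrix_inv V ** V) ** diag_exp ?Y) ** matrix_inv V"
      unfolding Pf Qf by (simp only: matrix_mul_assoc)
    also have "\<dots> = V ** diag_exp (?X + ?Y) ** matrix_inv V"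
      by (simp only: inv_cancel(3)[OF Vi] matrix_mul_rid diag_exp_add)
    also have "\<dots> = mat 1"
      by (simp only: z diag_exp_zero matrix_mul_rid inv_cancel(4)[OF Vi])
    finally show ?thesis .
  qed
  have intP: "intm (P n1 n2)" for n1 n2
    unfolding P_def by (intro intm_mult intm_matpow_int M1_SL M2_SL)
  have intQ: "intm (Q n1 n2)" for n1 n2
    unfolding Q_def by (intro intm_mult intm_matpow_int M1_SL M2_SL)
  have LP: "L t ** P n1 n2 = S ** Rot (t * r) ** diag_exp (t *\<^sub>R eps + (of_int n1 *\<^sub>R w1 + of_int n2 *\<^sub>R w2)) ** matrix_inv V"
    for t n1 n2
    unfolding Lt Pf by (simp add: matrix_mul_assoc inv_cancel[OF Vi] diag_exp_add[symmetric])
  have lat: "{L t *v n | n. n \<in> int_vecs} = {(L t ** P n1 n2) *v n | n. n \<in> int_vecs}" for t n1 n2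
  proof (intro set_eqI iffI)
    fix y assume "y \<in> {L t *v n | n. n \<in> int_vecs}"
    then obtain n where n: "n \<in> int_vecs" "y = L t *v n" by blast
    have "y = (L t ** P n1 n2) *v (Q n1 n2 *v n)"
      using n(2) PQ by (simp add: matrix_vector_mul_assoc matrix_mul_assoc[symmetric])
    moreover have "Q n1 n2 *v n \<in> int_vecs" by (rule intm_vec[OF intQ n(1)])
    ultimately show "y \<in> {(L t ** P n1 n2) *v n | n. n \<in> int_vecs}" by blast
  next
    fix y assume "y \<in> {(L t ** P n1 n2) *v n | n. n \<in> int_vecs}"
    then obtain n where n: "n \<in> int_vecs" "y = (L t ** P n1 n2) *v n" by blast
    have "y = L t *v (P n1 n2 *v n)" using n(2) by (simp add: matrix_vector_mul_assoc)
    moreover have "P n1 n2 *v n \<in> int_vecs" by (rule intm_vec[OF intP n(1)])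
    ultimately show "y \<in> {L t *v n | n. n \<in> int_vecs}" by blast
  qed
  have key: "\<exists>n1 n2 :: int. \<exists>\<theta>1 \<theta>2 :: real.
            \<theta>1 \<in> {-1/2<..1/2} \<and> \<theta>2 \<in> {-1/2<..1/2} \<and>
            L t ** P n1 n2 = S ** Rot (t * r) ** diag_exp (\<theta>1 *\<^sub>R w1 + \<theta>2 *\<^sub>R w2) ** matrix_inv V" for t
  proof -
    have "(t *\<^sub>R eps)$1 + (t *\<^sub>R eps)$2 + (t *\<^sub>R eps)$3 = 0"
    proof -
      have "(t *\<^sub>R eps)$1 + (t *\<^sub>R eps)$2 + (t *\<^sub>R eps)$3 = t * (eps$1 + eps$2 + eps$3)"
        by (simp add: algebra_simps)
      then show ?thesis using seps by simp
    qed
    then obtain a b where ab: "t *\<^sub>R eps = a *\<^sub>R w1 + b *\<^sub>R w2"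
      using lin_solve[OF sw1 sw2 _ ind] by blast
    define n1 where "n1 = \<lfloor>1/2 - a\<rfloor>"
    define n2 where "n2 = \<lfloor>1/2 - b\<rfloor>"
    have t1: "a + of_int n1 \<in> {-1/2<..1/2}"
    proof -
      have "real_of_int \<lfloor>1/2 - a\<rfloor> \<le> 1/2 - a" "1/2 - a < real_of_int \<lfloor>1/2 - a\<rfloor> + 1"
        by linarith+
      then show ?thesis unfolding n1_def n2_def greaterThanAtMost_iff by (intro conjI; linarith)
    qed
    have t2: "b + of_int n2 \<in> {-1/2<..1/2}"
    proof -
      have "real_of_int \<lfloor>1/2 - b\<rfloor> \<le> 1/2 - b" "1/2 - b < real_of_int \<lfloor>1/2 - b\<rfloor> + 1"
        by linarith+
      then show ?thesis unfolding n1_def n2_def greaterThanAtMost_iff by (intro conjI; linarith)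
    qed
    have ve: "t *\<^sub>R eps + (of_int n1 *\<^sub>R w1 + of_int n2 *\<^sub>R w2) = (a + of_int n1) *\<^sub>R w1 + (b + of_int n2) *\<^sub>R w2"
      unfolding ab by (simp add: algebra_simps)
    have "L t ** P n1 n2 = S ** Rot (t * r) ** diag_exp ((a + of_int n1) *\<^sub>R w1 + (b + of_int n2) *\<^sub>R w2) ** matrix_inv V"
      by (simp only: LP ve)
    then show ?thesis using t1 t2 by blast
  qed
  have part1: "\<forall>t\<ge>0. \<exists>n1 n2 :: int. \<exists>\<theta>1 \<theta>2 :: real.
            \<theta>1 \<in> {-1/2<..1/2} \<and> \<theta>2 \<in> {-1/2<..1/2} \<and>
            L t ** matpow_int M1 n1 ** matpow_int M2 n2
              = S ** mexp (t *\<^sub>R B)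
                  ** diag_exp (\<theta>1 *\<^sub>R (\<chi> j. ln (lam1 $ j)) + \<theta>2 *\<^sub>R (\<chi> j. ln (lam2 $ j)))
                  ** matrix_inv V \<and>
            {L t *v n | n. n \<in> int_vecs}
              = {(L t ** matpow_int M1 n1 ** matpow_int M2 n2) *v n | n. n \<in> int_vecs}"
  proof (intro allI impI)
    fix t :: real assume "t \<ge> 0"
    obtain n1 n2 \<theta>1 \<theta>2 where k: "\<theta>1 \<in> {-1/2<..1/2}" "\<theta>2 \<in> {-1/2<..1/2}"
      "L t ** P n1 n2 = S ** Rot (t * r) ** diag_exp (\<theta>1 *\<^sub>R w1 + \<theta>2 *\<^sub>R w2) ** matrix_inv V"
      using key[of t] by blast
    have "L t ** matpow_int M1 n1 ** matpow_int M2 n2 = L t ** P n1 n2"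
      unfolding P_def by (simp add: matrix_mul_assoc)
    show "\<exists>n1 n2 :: int. \<exists>\<theta>1 \<theta>2 :: real.
            \<theta>1 \<in> {-1/2<..1/2} \<and> \<theta>2 \<in> {-1/2<..1/2} \<and>
            L t ** matpow_int M1 n1 ** matpow_int M2 n2
              = S ** mexp (t *\<^sub>R B)
                  ** diag_exp (\<theta>1 *\<^sub>R (\<chi> j. ln (lam1 $ j)) + \<theta>2 *\<^sub>R (\<chi> j. ln (lam2 $ j)))
                  ** matrix_inv V \<and>
            {L t *v n | n. n \<in> int_vecs}
              = {(L t ** matpow_int M1 n1 ** matpow_int M2 n2) *v n | n. n \<in> int_vecs}"
    proof (intro exI conjI)
      show "\<theta>1 \<in> {-1/2<..1/2}" "\<theta>2 \<in> {-1/2<..1/2}" by (rule k(1), rule k(2))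
      show "L t ** matpow_int M1 n1 ** matpow_int M2 n2
              = S ** mexp (t *\<^sub>R B)
                  ** diag_exp (\<theta>1 *\<^sub>R (\<chi> j. ln (lam1 $ j)) + \<theta>2 *\<^sub>R (\<chi> j. ln (lam2 $ j)))
                  ** matrix_inv V"
        using \<open>L t ** matpow_int M1 n1 ** matpow_int M2 n2 = L t ** P n1 n2\<close> k(3)
        unfolding mB w1_def w2_def by simp
      show "{L t *v n | n. n \<in> int_vecs}
              = {(L t ** matpow_int M1 n1 ** matpow_int M2 n2) *v n | n. n \<in> int_vecs}"
        using \<open>L t ** matpow_int M1 n1 ** matpow_int M2 n2 = L t ** P n1 n2\<close> lat[of t n1 n2]
        by simp
    qed
  qed
  obtain cS where cS: "cS > 0" "\<And>x. cS * norm x \<le> norm (S *v x)"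
    using inv_lower[OF S_inv] by blast
  define K where "K = (\<bar>w1$1\<bar> + \<bar>w2$1\<bar>) + (\<bar>w1$2\<bar> + \<bar>w2$2\<bar>) + (\<bar>w1$3\<bar> + \<bar>w2$3\<bar>)"
  have Kb: "\<bar>(\<theta>1 *\<^sub>R w1 + \<theta>2 *\<^sub>R w2) $ j\<bar> \<le> K"
    if "\<theta>1 \<in> {-1/2<..1/2}" "\<theta>2 \<in> {-1/2<..1/2}" for \<theta>1 \<theta>2 j
  proof -
    have a1: "\<bar>\<theta>1\<bar> \<le> 1" "\<bar>\<theta>2\<bar> \<le> 1" using that by auto
    have "\<bar>(\<theta>1 *\<^sub>R w1 + \<theta>2 *\<^sub>R w2) $ j\<bar> \<le> \<bar>\<theta>1\<bar> * \<bar>w1$j\<bar> + \<bar>\<theta>2\<bar> * \<bar>w2$j\<bar>"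
      by (simp add: abs_mult[symmetric] abs_triangle_ineq)
    also have "\<dots> \<le> \<bar>w1$j\<bar> + \<bar>w2$j\<bar>"
      using a1 by (intro add_mono) (auto intro: mult_left_le_one_le)
    also have "\<dots> \<le> K" unfolding K_def using exhaust_3[of j] by auto
    finally show ?thesis .
  qed
  have part2: "\<forall>t\<ge>0. \<forall>n\<in>int_vecs - {0}. norm (L t *v n) \<ge> cS * exp (-K)"
  proof (intro allI impI ballI)
    fix t :: real and n :: "real^3" assume "t \<ge> 0" and n: "n \<in> int_vecs - {0}"
    obtain n1 n2 \<theta>1 \<theta>2 where k: "\<theta>1 \<in> {-1/2<..1/2}" "\<theta>2 \<in> {-1/2<..1/2}"
      "L t ** P n1 n2 = S ** Rot (t * r) ** diag_exp (\<theta>1 *\<^sub>R w1 + \<theta>2 *\<^sub>R w2) ** matrix_inv V"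
      using key[of t] by blast
    define m where "m = Q n1 n2 *v n"
    have mi: "m \<in> int_vecs" unfolding m_def using n by (intro intm_vec[OF intQ]) auto
    have Pm: "P n1 n2 *v m = n" unfolding m_def by (simp add: matrix_vector_mul_assoc PQ)
    have m0: "m \<noteq> 0" using Pm n by auto
    define y where "y = transpose V *v m"
    have ny: "norm y = norm m" unfolding y_def by (rule orth_norm) (simp add: V_orth)
    have "L t *v n = (L t ** P n1 n2) *v m" by (simp add: Pm matrix_vector_mul_assoc[symmetric])
    also have "\<dots> = S *v (Rot (t * r) *v (diag_exp (\<theta>1 *\<^sub>R w1 + \<theta>2 *\<^sub>R w2) *v y))"
      unfolding k(3) y_def VT by (simp only: matrix_vector_mul_assoc matrix_mul_assoc)
    finally have Ln: "L t *v n = S *v (Rot (t * r) *v (diag_exp (\<theta>1 *\<^sub>R w1 + \<theta>2 *\<^sub>R w2) *v y))" .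
    have "cS * exp (-K) \<le> cS * (exp (-K) * norm y)"
      using cS(1) int_vec_norm[OF mi m0] ny by simp
    also have "\<dots> \<le> cS * norm (diag_exp (\<theta>1 *\<^sub>R w1 + \<theta>2 *\<^sub>R w2) *v y)"
      using cS(1) diag_exp_lower[OF Kb[OF k(1,2)]] by (intro mult_left_mono) auto
    also have "\<dots> = cS * norm (Rot (t * r) *v (diag_exp (\<theta>1 *\<^sub>R w1 + \<theta>2 *\<^sub>R w2) *v y))"
      by (simp add: orth_norm[OF Rot_orth])
    also have "\<dots> \<le> norm (L t *v n)" unfolding Ln by (rule cS(2))
    finally show "norm (L t *v n) \<ge> cS * exp (-K)" .
  qed
  have "cS * exp (-K) > 0" using cS(1) by simp
  then show ?thesis using part1 part2 by blast
qed

end
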